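(* Let $H,K$ be complex Hilbert spaces, fix $\lambda\in(0,1)$, and let $\Phi:\mathcal{B}(H)\to\mathcal{B}(K)$ be a bijective map satisfying $$\Delta_\lambda(\Phi(A)\Phi(B))=\Phi(\Delta_\lambda(AB))\quad\text{for all }A,B\in\mathcal{B}(H).\qquad(\ast)$$ Then $\Phi(0)=0$, and there exists a bijective function $h:\mathbb{C}\to\mathbb{C}$ such that: (i) $\Phi(\alpha I)=h(\alpha)I$ for all $\alpha\in\mathbb{C}$; (ii) $h(\alpha\beta)=h(\alpha)h(\beta)$ for all $\alpha,\beta\in\mathbb{C}$; (iii) $h(1)=1$ and $h(-\alpha)=-h(\alpha)$ for all $\alpha\in\mathbb{C}$.
   Context: For $T\in\mathcal{B}(H)$, $|T|=(T^*T)^{1/2}$ and $T=V|T|$ is the polar decomposition, where $V$ is the partial isometry with $\mathcal{N}(V)=\mathcal{N}(T)$ and $\mathcal{N}(V^* )=\mathcal{N}(T^* )$. For $\lambda\in[0,1]$, the $\lambda$-Aluthge transform of $T$ is $\Delta_\lambda(T)=|T|^\lambda V|T|^{1-\lambda}$, with powers defined by continuous functional calculus. No linearity or continuity of $\Phi$ is assumed. *)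

theory Defs
  imports "HOL-Analysis.Analysis"
begin

class complex_vector = real_vector +
  fixes scaleC :: "complex \<Rightarrow> 'a \<Rightarrow> 'a"
  assumes scaleC_add_right: "scaleC a (x + y) = scaleC a x + scaleC a y"
    and scaleC_add_left: "scaleC (a + b) x = scaleC a x + scaleC b x"
    and scaleC_scaleC: "scaleC a (scaleC b x) = scaleC (a * b) x"
    and scaleC_one: "scaleC 1 x = x"
    and scaleC_of_real: "scaleC (complex_of_real r) x = scaleR r x"

class complex_inner = complex_vector + real_normed_vector +
  fixes cinner :: "'a \<Rightarrow> 'a \<Rightarrow> complex"
  assumes cinner_commute: "cinner x y = cnj (cinner y x)"
    and cinner_add_right: "cinner x (y + z) = cinner x y + cinner x z"
    and cinner_scaleC_right: "cinner x (scaleC a y) = a * cinner x y"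
    and cinner_self_real: "Im (cinner x x) = 0"
    and cinner_self_nonneg: "0 \<le> Re (cinner x x)"
    and cinner_self_zero: "cinner x x = 0 \<longleftrightarrow> x = 0"
    and norm_eq_sqrt_cinner: "norm x = sqrt (Re (cinner x x))"

class chilbert_space = complex_inner + complete_space

definition bounded_clinear :: "('a::complex_inner \<Rightarrow> 'b::complex_inner) \<Rightarrow> bool" where
  "bounded_clinear f \<longleftrightarrow>
     (\<forall>x y. f (x + y) = f x + f y) \<and> (\<forall>c x. f (scaleC c x) = scaleC c (f x)) \<and>
     (\<exists>K. \<forall>x. norm (f x) \<le> norm x * K)"

definition bops :: "('a::complex_inner \<Rightarrow> 'a) set" where
  "bops = {T. bounded_clinear T}"

definition adj :: "('a::complex_inner \<Rightarrow> 'a) \<Rightarrow> ('a \<Rightarrow> 'a)" where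
  "adj T = (THE S. \<forall>x y. cinner (T x) y = cinner x (S y))"

definition ker :: "('a::complex_inner \<Rightarrow> 'a) \<Rightarrow> 'a set" where
  "ker T = {x. T x = 0}"

definition positive_op :: "('a::complex_inner \<Rightarrow> 'a) \<Rightarrow> bool" where
  "positive_op P \<longleftrightarrow> bounded_clinear P \<and> (\<forall>x. Im (cinner x (P x)) = 0 \<and> 0 \<le> Re (cinner x (P x)))"

definition op_poly :: "real list \<Rightarrow> ('a::complex_inner \<Rightarrow> 'a) \<Rightarrow> ('a \<Rightarrow> 'a)" where
  "op_poly cs P = (\<lambda>x. \<Sum>i<length cs. scaleC (complex_of_real (cs ! i)) ((P ^^ i) x))"

definition rpoly :: "real list \<Rightarrow> real \<Rightarrow> real" where
  "rpoly cs t = (\<Sum>i<length cs. cs ! i * t ^ i)"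

text \<open>For a positive operator P (spectrum contained in [0, norm P]) and a continuous real
  function f, f(P) is the norm limit of p_n(P) for any sequence of real polynomials p_n
  converging uniformly to f on [0, norm P].\<close>
definition fcalc :: "(real \<Rightarrow> real) \<Rightarrow> ('a::complex_inner \<Rightarrow> 'a) \<Rightarrow> ('a \<Rightarrow> 'a)" where
  "fcalc f P = (THE Q. bounded_clinear Q \<and>
     (\<forall>ps :: nat \<Rightarrow> real list.
        (\<forall>e>0. eventually (\<lambda>n. \<forall>t\<in>{0..onorm P}. \<bar>rpoly (ps n) t - f t\<bar> < e) sequentially) \<longrightarrow>
        ((\<lambda>n. onorm (\<lambda>x. op_poly (ps n) P x - Q x)) \<longlonglongrightarrow> 0)))"

definition absop :: "('a::complex_inner \<Rightarrow> 'a) \<Rightarrow> ('a \<Rightarrow> 'a)" where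
  "absop T = fcalc sqrt (adj T \<circ> T)"

definition oppow :: "('a::complex_inner \<Rightarrow> 'a) \<Rightarrow> real \<Rightarrow> ('a \<Rightarrow> 'a)" where
  "oppow P r = fcalc (\<lambda>t. t powr r) P"

definition partial_isometry :: "('a::complex_inner \<Rightarrow> 'a) \<Rightarrow> bool" where
  "partial_isometry V \<longleftrightarrow> bounded_clinear V \<and> V \<circ> adj V \<circ> V = V"

definition polar_V :: "('a::complex_inner \<Rightarrow> 'a) \<Rightarrow> ('a \<Rightarrow> 'a)" where
  "polar_V T = (THE V. partial_isometry V \<and> T = V \<circ> absop T \<and>
                   ker V = ker T \<and> ker (adj V) = ker (adj T))"

definition aluthge :: "real \<Rightarrow> ('a::complex_inner \<Rightarrow> 'a) \<Rightarrow> ('a \<Rightarrow> 'a)" where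
  "aluthge l T = oppow (absop T) l \<circ> polar_V T \<circ> oppow (absop T) (1 - l)"

end

theory Submission imports Defs begin

section \<open>Vector algebra\<close>

lemma scaleC_zero_left [simp]: "scaleC 0 (x::'a::complex_vector) = 0"
  using scaleC_of_real[of 0 x] by simp
lemma scaleC_zero_right [simp]: "scaleC a (0::'a::complex_vector) = 0"
  using scaleC_add_right[of a "0::'a" 0] by simp
lemma scaleC_minus_left: "scaleC (- a) (x::'a::complex_vector) = - scaleC a x"
  using scaleC_add_left[of "-a" a x] by (simp add: eq_neg_iff_add_eq_0)
lemma scaleC_minus_right: "scaleC a (- x::'a::complex_vector) = - scaleC a x"
  using scaleC_add_right[of a "-x" x] by (simp add: eq_neg_iff_add_eq_0)
lemma scaleC_diff_right: "scaleC a (x - y::'a::complex_vector) = scaleC a x - scaleC a y"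
  using scaleC_add_right[of a x "-y"] by (simp add: scaleC_minus_right)
lemma scaleC_diff_left: "scaleC (a - b) (x::'a::complex_vector) = scaleC a x - scaleC b x"
  using scaleC_add_left[of a "-b" x] by (simp add: scaleC_minus_left)
lemma scaleC_sum_left: "scaleC (sum f A) (x::'a::complex_vector) = (\<Sum>i\<in>A. scaleC (f i) x)"
  by (induction A rule: infinite_finite_induct) (auto simp: scaleC_add_left)
lemma scaleC_sum_right: "scaleC a (sum f A::'a::complex_vector) = (\<Sum>i\<in>A. scaleC a (f i))"
  by (induction A rule: infinite_finite_induct) (auto simp: scaleC_add_right)
lemma scaleC_eq_0_iff: "scaleC a (x::'a::complex_vector) = 0 \<longleftrightarrow> a = 0 \<or> x = 0"
proof
  assume h: "scaleC a x = 0"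
  show "a = 0 \<or> x = 0"
  proof (cases "a = 0")
    case False
    have "x = scaleC (inverse a) (scaleC a x)" using False by (simp add: scaleC_scaleC scaleC_one)
    then show ?thesis using h by simp
  qed simp
qed auto
lemma scaleC_cancel_left: "scaleC a (x::'a::complex_vector) = scaleC b x \<longleftrightarrow> a = b \<or> x = 0"
  using scaleC_eq_0_iff[of "a - b" x] by (auto simp: scaleC_diff_left)

lemma cinner_add_left: "cinner (x + y) (z::'a::complex_inner) = cinner x z + cinner y z"
  by (metis cinner_add_right cinner_commute complex_cnj_add)
lemma cinner_scaleC_left: "cinner (scaleC a x) (y::'a::complex_inner) = cnj a * cinner x y"
  by (metis cinner_commute cinner_scaleC_right complex_cnj_mult)
lemma cinner_zero_left [simp]: "cinner 0 (x::'a::complex_inner) = 0"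
  using cinner_add_left[of 0 0 x] by simp
lemma cinner_zero_right [simp]: "cinner (x::'a::complex_inner) 0 = 0"
  using cinner_add_right[of x 0 0] by simp
lemma cinner_minus_left: "cinner (- x) (y::'a::complex_inner) = - cinner x y"
proof -
  have "cinner (- x) y + cinner x y = 0" using cinner_add_left[of "-x" x y] by simp
  then show ?thesis by (simp add: eq_neg_iff_add_eq_0)
qed
lemma cinner_minus_right: "cinner x (- y::'a::complex_inner) = - cinner x y"
proof -
  have "cinner x (- y) + cinner x y = 0" using cinner_add_right[of x "-y" y] by simp
  then show ?thesis by (simp add: eq_neg_iff_add_eq_0)
qed
lemma cinner_diff_left: "cinner (x - y) (z::'a::complex_inner) = cinner x z - cinner y z"
  using cinner_add_left[of x "-y" z] by (simp add: cinner_minus_left)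
lemma cinner_diff_right: "cinner x (y - z::'a::complex_inner) = cinner x y - cinner x z"
  using cinner_add_right[of x y "-z"] by (simp add: cinner_minus_right)
lemma norm_sq_cinner: "(norm (x::'a::complex_inner))\<^sup>2 = Re (cinner x x)"
  using norm_eq_sqrt_cinner[of x] cinner_self_nonneg[of x] by simp
lemma cinner_self: "cinner x (x::'a::complex_inner) = complex_of_real ((norm x)\<^sup>2)"
  using norm_sq_cinner[of x] cinner_self_real[of x] by (simp add: complex_eq_iff)
lemma norm_scaleC: "norm (scaleC a (x::'a::complex_inner)) = cmod a * norm x"
proof -
  have "cinner (scaleC a x) (scaleC a x) = (a * cnj a) * cinner x x"
    by (simp add: cinner_scaleC_left cinner_scaleC_right mult_ac)
  also have "\<dots> = complex_of_real ((cmod a * norm x)\<^sup>2)"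
    by (simp add: cinner_self complex_norm_square[symmetric] power_mult_distrib)
  finally have "(norm (scaleC a x))\<^sup>2 = (cmod a * norm x)\<^sup>2"
    by (simp add: norm_sq_cinner)
  then show ?thesis by (simp add: power2_eq_iff_nonneg)
qed

lemma pythag: "cinner x y = 0 \<Longrightarrow> (norm (x + y::'a::complex_inner))\<^sup>2 = (norm x)\<^sup>2 + (norm y)\<^sup>2"
proof -
  assume h: "cinner x y = 0"
  then have h2: "cinner y x = 0" by (metis cinner_commute complex_cnj_zero)
  have "cinner (x+y) (x+y) = cinner x x + cinner y y"
    by (simp add: cinner_add_left cinner_add_right h h2)
  then have "Re (cinner (x+y) (x+y)) = Re (cinner x x) + Re (cinner y y)" by simp
  then show ?thesis by (simp add: norm_sq_cinner)
qed
lemma cinner_ext_right: "(\<And>z. cinner z x = cinner z y) \<Longrightarrow> x = (y::'a::complex_inner)"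
proof -
  assume "\<And>z. cinner z x = cinner z y"
  then have "cinner (x - y) (x - y) = 0" by (simp add: cinner_diff_right)
  then show "x = y" using cinner_self_zero[of "x - y"] by simp
qed
lemma cinner_ext_left: "(\<And>z. cinner x z = cinner y z) \<Longrightarrow> x = (y::'a::complex_inner)"
  by (rule cinner_ext_right) (metis cinner_commute)

definition proj :: "'a::complex_inner \<Rightarrow> 'a \<Rightarrow> 'a" where
  "proj v x = scaleC (cinner v x / complex_of_real ((norm v)\<^sup>2)) v"

lemma cinner_proj_orth: "cinner v (x - proj v x) = 0"
proof (cases "v = 0")
  case False
  then have "norm v \<noteq> 0" by simp
  then show ?thesis
    by (simp add: proj_def cinner_diff_right cinner_scaleC_right cinner_self)
qed (simp add: proj_def)

lemma cinner_v_proj: "cinner v (proj v x) = cinner v x"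
  using cinner_proj_orth[of v x] by (simp add: cinner_diff_right)

lemma proj_orth: "cinner (proj v x) (x - proj v x) = 0"
proof -
  obtain c where c: "proj v x = scaleC c v" by (auto simp: proj_def)
  have "cinner (proj v x) (x - proj v x) = cnj c * cinner v (x - proj v x)"
    by (subst (1) c) (rule cinner_scaleC_left)
  then show ?thesis by (simp add: cinner_proj_orth)
qed

lemma norm_proj: "norm (proj v x) = cmod (cinner v x) / norm v"
proof (cases "v = 0")
  case False
  then show ?thesis by (simp add: proj_def norm_scaleC norm_divide norm_mult power2_eq_square)
qed (simp add: proj_def)

lemma proj_decomp_norm: "(norm x)\<^sup>2 = (norm (proj v x))\<^sup>2 + (norm (x - proj v x))\<^sup>2"
  using pythag[OF proj_orth[of v x]] by simp

lemma norm_proj_le: "norm (proj v x) \<le> norm x"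
proof -
  have "(norm (proj v x))\<^sup>2 \<le> (norm x)\<^sup>2" using proj_decomp_norm[of x v] by simp
  then show ?thesis by (rule power2_le_imp_le[OF _ norm_ge_zero])
qed

lemma norm_proj_diff_le: "norm (x - proj v x) \<le> norm x"
proof -
  have "(norm (x - proj v x))\<^sup>2 \<le> (norm x)\<^sup>2" using proj_decomp_norm[of x v] by simp
  then show ?thesis by (rule power2_le_imp_le[OF _ norm_ge_zero])
qed

lemma cauchy_schwarz: "cmod (cinner v x) \<le> norm v * norm (x::'a::complex_inner)"
proof (cases "v = 0")
  case False
  then show ?thesis using norm_proj_le[of v x] by (simp add: norm_proj divide_le_eq mult.commute)
qed simp

lemma proj_proj: "proj v (proj v x) = proj v x"
  by (simp only: proj_def[of v "proj v x"] cinner_v_proj) (simp only: proj_def)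


section \<open>Bounded operators\<close>

lemma bcl_add: "bounded_clinear f \<Longrightarrow> f (x + y) = f x + f y"
  by (simp add: bounded_clinear_def)
lemma bcl_scaleC: "bounded_clinear f \<Longrightarrow> f (scaleC c x) = scaleC c (f x)"
  by (simp add: bounded_clinear_def)
lemma bcl_zero: "bounded_clinear f \<Longrightarrow> f 0 = 0"
  using bcl_scaleC[of f 0 0] by simp
lemma bcl_minus: "bounded_clinear f \<Longrightarrow> f (- x) = - f x"
  using bcl_add[of f "-x" x] bcl_zero[of f] by (simp add: eq_neg_iff_add_eq_0)
lemma bcl_diff: "bounded_clinear f \<Longrightarrow> f (x - y) = f x - f y"
  using bcl_add[of f x "-y"] bcl_minus[of f y] by simp
lemma bcl_bounded_linear: "bounded_clinear f \<Longrightarrow> bounded_linear f"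
proof -
  assume f: "bounded_clinear f"
  then obtain K where K: "\<And>x. norm (f x) \<le> norm x * K" by (auto simp: bounded_clinear_def)
  show "bounded_linear f"
  proof (rule bounded_linear_intro[where K=K])
    show "f (x + y) = f x + f y" for x y using f by (rule bcl_add)
    show "f (r *\<^sub>R x) = r *\<^sub>R f x" for r x
      using bcl_scaleC[OF f, of "complex_of_real r" x] by (simp add: scaleC_of_real)
  qed (rule K)
qed

lemma bcl_intro:
  assumes "\<And>x y. f (x + y) = f x + f y" "\<And>c x. f (scaleC c x) = scaleC c (f x)"
    "\<And>x. norm (f x) \<le> norm x * K"
  shows "bounded_clinear f"
  using assms unfolding bounded_clinear_def by blast

lemma bcl_id: "bounded_clinear (\<lambda>x. x)"
  by (rule bcl_intro[where K=1]) auto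

lemma bcl_scale_op: "bounded_clinear (scaleC c)"
  by (rule bcl_intro[where K="cmod c"]) (auto simp: scaleC_add_right scaleC_scaleC mult.commute norm_scaleC)

lemma bcl_bound_nonneg:
  assumes f: "bounded_clinear f"
  obtains K where "K \<ge> 0" "\<And>x. norm (f x) \<le> norm x * K"
proof -
  obtain K1 where K1: "\<And>x. norm (f x) \<le> norm x * K1" using f by (auto simp: bounded_clinear_def)
  have "norm (f x) \<le> norm x * max K1 0" for x
  proof -
    have "norm x * K1 \<le> norm x * max K1 0" by (rule mult_left_mono) simp_all
    then show ?thesis using K1[of x] by linarith
  qed
  then show ?thesis using that[of "max K1 0"] by simp
qed

lemma bcl_comp: "bounded_clinear f \<Longrightarrow> bounded_clinear g \<Longrightarrow> bounded_clinear (f \<circ> g)"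
proof -
  assume f: "bounded_clinear f" and g: "bounded_clinear g"
  obtain K1 where K1: "K1 \<ge> 0" "\<And>x. norm (f x) \<le> norm x * K1" using bcl_bound_nonneg[OF f] by blast
  obtain K2 where K2: "K2 \<ge> 0" "\<And>x. norm (g x) \<le> norm x * K2" using bcl_bound_nonneg[OF g] by blast
  show ?thesis
  proof (rule bcl_intro[where K="K2 * K1"])
    fix x
    have "norm (f (g x)) \<le> norm (g x) * K1" by (rule K1(2))
    also have "\<dots> \<le> (norm x * K2) * K1" by (rule mult_right_mono[OF K2(2) K1(1)])
    finally show "norm ((f \<circ> g) x) \<le> norm x * (K2 * K1)" by (simp only: o_apply mult.assoc)
  next
    fix x y show "(f \<circ> g) (x + y) = (f \<circ> g) x + (f \<circ> g) y"
      by (simp only: o_apply bcl_add[OF f] bcl_add[OF g])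
  next
    fix c x show "(f \<circ> g) (scaleC c x) = scaleC c ((f \<circ> g) x)"
      by (simp only: o_apply bcl_scaleC[OF f] bcl_scaleC[OF g])
  qed
qed

lemma bcl_plus: "bounded_clinear f \<Longrightarrow> bounded_clinear g \<Longrightarrow> bounded_clinear (\<lambda>x. f x + g x)"
proof -
  assume f: "bounded_clinear f" and g: "bounded_clinear g"
  obtain K1 where K1: "K1 \<ge> 0" "\<And>x. norm (f x) \<le> norm x * K1" using bcl_bound_nonneg[OF f] by blast
  obtain K2 where K2: "K2 \<ge> 0" "\<And>x. norm (g x) \<le> norm x * K2" using bcl_bound_nonneg[OF g] by blast
  show ?thesis
  proof (rule bcl_intro[where K="K1 + K2"])
    fix x
    have "norm (f x + g x) \<le> norm (f x) + norm (g x)" by (rule norm_triangle_ineq)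
    also have "\<dots> \<le> norm x * K1 + norm x * K2" by (rule add_mono[OF K1(2) K2(2)])
    finally show "norm (f x + g x) \<le> norm x * (K1 + K2)" by (simp only: distrib_left)
  next
    fix x y show "f (x + y) + g (x + y) = (f x + g x) + (f y + g y)"
      by (simp only: bcl_add[OF f] bcl_add[OF g] add_ac)
  next
    fix c x show "f (scaleC c x) + g (scaleC c x) = scaleC c (f x + g x)"
      by (simp only: bcl_scaleC[OF f] bcl_scaleC[OF g] scaleC_add_right)
  qed
qed

lemma bcl_scaled: "bounded_clinear f \<Longrightarrow> bounded_clinear (\<lambda>x. scaleC c (f x))"
  using bcl_comp[OF bcl_scale_op[of c]] by (simp add: comp_def)

lemma bcl_minus_fun: "bounded_clinear f \<Longrightarrow> bounded_clinear g \<Longrightarrow> bounded_clinear (\<lambda>x. f x - g x)"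
  using bcl_plus[of f "\<lambda>x. scaleC (-1) (g x)"] bcl_scaled[of g "-1"]
  by (simp add: scaleC_minus_left scaleC_one)

lemma bcl_rank1: "bounded_clinear (\<lambda>x. scaleC (cinner v x) u)"
proof (rule bcl_intro[where K="norm v * norm u"])
  fix x
  show "norm (scaleC (cinner v x) u) \<le> norm x * (norm v * norm u)"
    using mult_right_mono[OF cauchy_schwarz[of v x] norm_ge_zero[of u]] by (simp add: norm_scaleC mult_ac)
next
  fix x y show "scaleC (cinner v (x + y)) u = scaleC (cinner v x) u + scaleC (cinner v y) u"
    by (simp only: cinner_add_right scaleC_add_left)
next
  fix c x show "scaleC (cinner v (scaleC c x)) u = scaleC c (scaleC (cinner v x) u)"
    by (simp only: cinner_scaleC_right scaleC_scaleC)
qed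

lemma bcl_proj: "bounded_clinear (proj v)"
proof (rule bcl_intro[where K=1])
  fix x show "norm (proj v x) \<le> norm x * 1" using norm_proj_le[of v x] by simp
next
  fix x y show "proj v (x + y) = proj v x + proj v y"
    by (simp only: proj_def cinner_add_right add_divide_distrib scaleC_add_left)
next
  fix c x show "proj v (scaleC c x) = scaleC c (proj v x)"
    by (simp only: proj_def cinner_scaleC_right scaleC_scaleC times_divide_eq_right)
qed

lemma adj_eq:
  assumes "\<And>x y. cinner (T x) y = cinner x (S y)"
  shows "adj T = S"
  unfolding adj_def
proof (rule the_equality)
  show "\<forall>x y. cinner (T x) y = cinner x (S y)" using assms by blast
  fix S' assume H: "\<forall>x y. cinner (T x) y = cinner x (S' y)"
  show "S' = S"
  proof (rule ext)
    fix y show "S' y = S y"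
    proof (rule cinner_ext_right)
      fix z
      have "cinner z (S' y) = cinner (T z) y" using H by simp
      also have "\<dots> = cinner z (S y)" by (rule assms)
      finally show "cinner z (S' y) = cinner z (S y)" .
    qed
  qed
qed

lemma trivial_fun_eq:
  assumes "\<forall>x::'a::complex_vector. x = 0"
  shows "(f::'b \<Rightarrow> 'a) = g"
proof (rule ext)
  fix x show "f x = g x" using assms[rule_format, of "f x"] assms[rule_format, of "g x"] by simp
qed


section \<open>Functional calculus on simple positive operators\<close>

lemma weierstrass_seq:
  fixes f :: "real \<Rightarrow> real"
  assumes "continuous_on {a..b} f"
  shows "\<exists>ps. \<forall>e>0. eventually (\<lambda>n. \<forall>t\<in>{a..b}. \<bar>rpoly (ps n) t - f t\<bar> < e) sequentially"
proof -
  have "\<exists>cs. \<forall>t\<in>{a..b}. \<bar>rpoly cs t - f t\<bar> < 1 / real (Suc n)" for n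
  proof -
    have e: "0 < 1 / real (Suc n)" by simp
    obtain g where g: "real_polynomial_function g" "\<And>t. t \<in> {a..b} \<Longrightarrow> \<bar>f t - g t\<bar> < 1 / real (Suc n)"
      using Stone_Weierstrass_real_polynomial_function[OF compact_Icc assms e] by blast
    obtain c N where gN: "g = (\<lambda>x. \<Sum>i\<le>N. c i * x^i)"
      using real_polynomial_function_imp_sum[OF g(1)] by blast
    have r: "rpoly (map c [0..<Suc N]) t = g t" for t
    proof -
      have "rpoly (map c [0..<Suc N]) t = (\<Sum>i<Suc N. c i * t^i)"
        unfolding rpoly_def length_map length_upt diff_zero
      proof (intro sum.cong refl)
        fix i assume "i \<in> {..<Suc N}"
        then have i: "i < Suc N - 0" by simp
        show "map c [0..<Suc N] ! i * t ^ i = c i * t ^ i"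
          using nth_map_upt[OF i, of c] by (simp del: upt_Suc)
      qed
      also have "\<dots> = g t" by (simp add: gN lessThan_Suc_atMost)
      finally show ?thesis .
    qed
    show ?thesis
    proof (rule exI[of _ "map c [0..<Suc N]"], intro ballI)
      fix t assume t: "t \<in> {a..b}"
      show "\<bar>rpoly (map c [0..<Suc N]) t - f t\<bar> < 1 / real (Suc n)"
        using g(2)[OF t] unfolding r by (simp add: abs_minus_commute)
    qed
  qed
  then have "\<forall>n. \<exists>cs. \<forall>t\<in>{a..b}. \<bar>rpoly cs t - f t\<bar> < 1 / real (Suc n)" by blast
  then obtain ps where ps: "\<forall>n. \<forall>t\<in>{a..b}. \<bar>rpoly (ps n) t - f t\<bar> < 1 / real (Suc n)"
    by (rule choice[THEN exE])
  show ?thesis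
  proof (rule exI[of _ ps], intro allI impI)
    fix e :: real assume e: "e > 0"
    obtain N where N: "1 / real (Suc N) < e"
      using nat_approx_posE[OF e] by blast
    show "eventually (\<lambda>n. \<forall>t\<in>{a..b}. \<bar>rpoly (ps n) t - f t\<bar> < e) sequentially"
    proof (rule eventually_sequentiallyI[of N])
      fix n assume "N \<le> n"
      then have le: "1 / real (Suc n) \<le> 1 / real (Suc N)" by (intro divide_left_mono) simp_all
      show "\<forall>t\<in>{a..b}. \<bar>rpoly (ps n) t - f t\<bar> < e"
      proof
        fix t assume "t \<in> {a..b}"
        then have "\<bar>rpoly (ps n) t - f t\<bar> < 1 / real (Suc n)" using ps by blast
        then show "\<bar>rpoly (ps n) t - f t\<bar> < e" using le N by linarith
      qed
    qed
  qed
qed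

lemma sum_scaleC_split:
  fixes u w :: "'a::complex_vector"
  shows "(\<Sum>i\<in>A. scaleC (complex_of_real (a i)) (scaleC (complex_of_real (p i)) u + scaleC (complex_of_real (q i)) w))
    = scaleC (complex_of_real (\<Sum>i\<in>A. a i * p i)) u + scaleC (complex_of_real (\<Sum>i\<in>A. a i * q i)) w"
proof -
  have "(\<Sum>i\<in>A. scaleC (complex_of_real (a i)) (scaleC (complex_of_real (p i)) u + scaleC (complex_of_real (q i)) w))
    = (\<Sum>i\<in>A. scaleC (complex_of_real (a i * p i)) u + scaleC (complex_of_real (a i * q i)) w)"
    by (rule sum.cong) (simp_all only: scaleC_add_right scaleC_scaleC of_real_mult)
  also have "\<dots> = (\<Sum>i\<in>A. scaleC (complex_of_real (a i * p i)) u) + (\<Sum>i\<in>A. scaleC (complex_of_real (a i * q i)) w)"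
    by (rule sum.distrib)
  also have "\<dots> = scaleC (complex_of_real (\<Sum>i\<in>A. a i * p i)) u + scaleC (complex_of_real (\<Sum>i\<in>A. a i * q i)) w"
    by (simp only: scaleC_sum_left of_real_sum)
  finally show ?thesis .
qed

lemma fcalc_proj:
  fixes E :: "'a::complex_inner \<Rightarrow> 'a" and f :: "real \<Rightarrow> real"
  assumes E: "bounded_clinear E" and EE: "\<And>x. E (E x) = E x"
    and nE: "\<And>x. norm (E x) \<le> norm x" and nE': "\<And>x. norm (x - E x) \<le> norm x"
    and x0: "E x0 \<noteq> 0" and c: "0 \<le> c" and f: "continuous_on {0..c} f"
  shows "fcalc f (\<lambda>x. scaleC (complex_of_real c) (E x)) =
    (\<lambda>x. scaleC (complex_of_real (f 0)) (x - E x) + scaleC (complex_of_real (f c)) (E x))"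
proof -
  define P where "P = (\<lambda>x. scaleC (complex_of_real c) (E x))"
  define Q where "Q = (\<lambda>x. scaleC (complex_of_real (f 0)) (x - E x) + scaleC (complex_of_real (f c)) (E x))"
  have Pb: "bounded_clinear P" unfolding P_def by (rule bcl_scaled[OF E])
  have IE: "bounded_clinear (\<lambda>x. x - E x)" by (rule bcl_minus_fun[OF bcl_id E])
  have gen_b: "bounded_clinear (\<lambda>x. scaleC (complex_of_real a) (x - E x) + scaleC (complex_of_real b) (E x))" for a b
    by (rule bcl_plus[OF bcl_scaled[OF IE] bcl_scaled[OF E]])
  have Qb: "bounded_clinear Q" unfolding Q_def by (rule gen_b)
  have onP: "onorm P = c"
  proof (rule antisym)
    show "onorm P \<le> c"
    proof (rule onorm_bound[OF c])
      fix x show "norm (P x) \<le> c * norm x"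
        unfolding P_def norm_scaleC norm_of_real abs_of_nonneg[OF c] by (rule mult_left_mono[OF nE c])
    qed
    have "norm (P (E x0)) / norm (E x0) \<le> onorm P" by (rule le_onorm[OF bcl_bounded_linear[OF Pb]])
    moreover have "norm (P (E x0)) = c * norm (E x0)"
      unfolding P_def EE norm_scaleC norm_of_real abs_of_nonneg[OF c] ..
    ultimately show "c \<le> onorm P" using x0 by simp
  qed
  have pow: "(P ^^ i) x = scaleC (complex_of_real (0^i)) (x - E x) + scaleC (complex_of_real (c^i)) (E x)" for i x
  proof (induction i)
    case 0 then show ?case by (simp add: scaleC_one)
  next
    case (Suc i)
    have "(P ^^ Suc i) x = P ((P ^^ i) x)" by simp
    also have "\<dots> = P (scaleC (complex_of_real (0^i)) (x - E x) + scaleC (complex_of_real (c^i)) (E x))"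
      by (simp only: Suc)
    also have "\<dots> = scaleC (complex_of_real c) (scaleC (complex_of_real (0^i)) (E x - E (E x)) + scaleC (complex_of_real (c^i)) (E (E x)))"
      by (simp only: P_def bcl_add[OF E] bcl_scaleC[OF E] bcl_diff[OF E])
    also have "\<dots> = scaleC (complex_of_real c * complex_of_real (c^i)) (E x)"
      by (simp only: EE diff_self scaleC_zero_right add_0_left scaleC_scaleC)
    also have "\<dots> = scaleC (complex_of_real (c^Suc i)) (E x)"
      by (simp only: of_real_mult[symmetric] power_Suc)
    finally show ?case by simp
  qed
  have opp: "op_poly cs P x = scaleC (complex_of_real (rpoly cs 0)) (x - E x) + scaleC (complex_of_real (rpoly cs c)) (E x)" for cs x
    unfolding op_poly_def rpoly_def pow by (rule sum_scaleC_split)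
  have diff: "(\<lambda>x. op_poly cs P x - Q' x) = (\<lambda>x. scaleC (complex_of_real (rpoly cs 0 - f 0)) (x - E x) + scaleC (complex_of_real (rpoly cs c - f c)) (E x))"
    if "Q' = Q" for cs Q'
    unfolding that Q_def opp of_real_diff scaleC_diff_left add_diff_add by (rule refl)
  have onorm_gen: "onorm (\<lambda>x. scaleC (complex_of_real a) (x - E x) + scaleC (complex_of_real b) (E x)) \<le> \<bar>a\<bar> + \<bar>b\<bar>" for a b
  proof (rule onorm_bound)
    fix x
    have "norm (scaleC (complex_of_real a) (x - E x) + scaleC (complex_of_real b) (E x))
      \<le> \<bar>a\<bar> * norm (x - E x) + \<bar>b\<bar> * norm (E x)"
      using norm_triangle_ineq[of "scaleC (complex_of_real a) (x - E x)" "scaleC (complex_of_real b) (E x)"]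
      unfolding norm_scaleC norm_of_real .
    also have "\<dots> \<le> \<bar>a\<bar> * norm x + \<bar>b\<bar> * norm x"
      by (intro add_mono mult_left_mono nE nE') simp_all
    finally show "norm (scaleC (complex_of_real a) (x - E x) + scaleC (complex_of_real b) (E x)) \<le> (\<bar>a\<bar> + \<bar>b\<bar>) * norm x"
      by (simp add: algebra_simps)
  qed simp
  have conv: "(\<lambda>n. onorm (\<lambda>x. op_poly (ps n) P x - Q x)) \<longlonglongrightarrow> 0"
    if u: "\<forall>e>0. eventually (\<lambda>n. \<forall>t\<in>{0..onorm P}. \<bar>rpoly (ps n) t - f t\<bar> < e) sequentially" for ps
  proof -
    have t0: "(\<lambda>n. \<bar>rpoly (ps n) 0 - f 0\<bar>) \<longlonglongrightarrow> 0"
      unfolding tendsto_iff dist_real_def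
    proof (intro allI impI)
      fix e :: real assume "e > 0"
      then have "eventually (\<lambda>n. \<forall>t\<in>{0..c}. \<bar>rpoly (ps n) t - f t\<bar> < e) sequentially"
        using u onP by simp
      then show "eventually (\<lambda>n. \<bar>\<bar>rpoly (ps n) 0 - f 0\<bar> - 0\<bar> < e) sequentially"
        by (rule eventually_mono) (use c in simp)
    qed
    have tc: "(\<lambda>n. \<bar>rpoly (ps n) c - f c\<bar>) \<longlonglongrightarrow> 0"
      unfolding tendsto_iff dist_real_def
    proof (intro allI impI)
      fix e :: real assume "e > 0"
      then have "eventually (\<lambda>n. \<forall>t\<in>{0..c}. \<bar>rpoly (ps n) t - f t\<bar> < e) sequentially"
        using u onP by simp
      then show "eventually (\<lambda>n. \<bar>\<bar>rpoly (ps n) c - f c\<bar> - 0\<bar> < e) sequentially"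
        by (rule eventually_mono) (use c in simp)
    qed
    show ?thesis
    proof (rule tendsto_sandwich[of "\<lambda>_. 0" _ _ "\<lambda>n. \<bar>rpoly (ps n) 0 - f 0\<bar> + \<bar>rpoly (ps n) c - f c\<bar>"])
      show "eventually (\<lambda>n. 0 \<le> onorm (\<lambda>x. op_poly (ps n) P x - Q x)) sequentially"
        unfolding diff[OF refl] by (intro always_eventually allI onorm_pos_le bcl_bounded_linear gen_b)
      show "eventually (\<lambda>n. onorm (\<lambda>x. op_poly (ps n) P x - Q x) \<le> \<bar>rpoly (ps n) 0 - f 0\<bar> + \<bar>rpoly (ps n) c - f c\<bar>) sequentially"
        unfolding diff[OF refl] by (intro always_eventually allI onorm_gen)
      show "(\<lambda>n. \<bar>rpoly (ps n) 0 - f 0\<bar> + \<bar>rpoly (ps n) c - f c\<bar>) \<longlonglongrightarrow> 0"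
        using tendsto_add[OF t0 tc] by simp
    qed simp
  qed
  obtain ps0 where ps0: "\<forall>e>0. eventually (\<lambda>n. \<forall>t\<in>{0..c}. \<bar>rpoly (ps0 n) t - f t\<bar> < e) sequentially"
    using weierstrass_seq[OF f] by blast
  have "fcalc f P = Q"
    unfolding fcalc_def
  proof (rule the_equality)
    show "bounded_clinear Q \<and> (\<forall>ps. (\<forall>e>0. eventually (\<lambda>n. \<forall>t\<in>{0..onorm P}. \<bar>rpoly (ps n) t - f t\<bar> < e) sequentially) \<longrightarrow>
        (\<lambda>n. onorm (\<lambda>x. op_poly (ps n) P x - Q x)) \<longlonglongrightarrow> 0)"
      using Qb conv by blast
    fix Q' assume H: "bounded_clinear Q' \<and> (\<forall>ps. (\<forall>e>0. eventually (\<lambda>n. \<forall>t\<in>{0..onorm P}. \<bar>rpoly (ps n) t - f t\<bar> < e) sequentially) \<longrightarrow>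
        (\<lambda>n. onorm (\<lambda>x. op_poly (ps n) P x - Q' x)) \<longlonglongrightarrow> 0)"
    have c1: "(\<lambda>n. onorm (\<lambda>x. op_poly (ps0 n) P x - Q' x)) \<longlonglongrightarrow> 0" using H ps0 onP by simp
    have c2: "(\<lambda>n. onorm (\<lambda>x. op_poly (ps0 n) P x - Q x)) \<longlonglongrightarrow> 0" using conv ps0 onP by simp
    have oppb: "bounded_clinear (op_poly cs P)" for cs
      unfolding opp[abs_def] by (rule gen_b)
    show "Q' = Q"
    proof
      fix x
      let ?g1 = "\<lambda>n. (\<lambda>x. op_poly (ps0 n) P x - Q' x)"
      let ?g2 = "\<lambda>n. (\<lambda>x. op_poly (ps0 n) P x - Q x)"
      have b1: "bounded_linear (?g1 n)" for n by (intro bcl_bounded_linear bcl_minus_fun oppb) (use H in blast)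
      have b2: "bounded_linear (?g2 n)" for n by (intro bcl_bounded_linear bcl_minus_fun oppb Qb)
      have le: "norm (Q' x - Q x) \<le> (onorm (?g1 n) + onorm (?g2 n)) * norm x" for n
      proof -
        have "Q' x - Q x = ?g2 n x - ?g1 n x" by simp
        then have "norm (Q' x - Q x) \<le> norm (?g2 n x) + norm (?g1 n x)"
          by (metis norm_triangle_ineq4)
        also have "\<dots> \<le> onorm (?g2 n) * norm x + onorm (?g1 n) * norm x"
          by (intro add_mono onorm b1 b2)
        finally show ?thesis by (simp add: algebra_simps)
      qed
      have "(\<lambda>n. (onorm (?g1 n) + onorm (?g2 n)) * norm x) \<longlonglongrightarrow> (0 + 0) * norm x"
        by (intro tendsto_intros c1 c2)
      then have "norm (Q' x - Q x) \<le> 0"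
        using le by (intro tendsto_le[OF trivial_limit_sequentially, of _ 0 "\<lambda>_. norm (Q' x - Q x)"]) auto
      then show "Q' x = Q x" by simp
    qed
  qed
  then show ?thesis unfolding P_def Q_def .
qed


section \<open>Aluthge transform of scalars\<close>

lemma cont_powr: "0 < r \<Longrightarrow> continuous_on {0..m} (\<lambda>t::real. t powr r)"
  by (rule continuous_on_powr'[OF continuous_on_id continuous_on_const]) auto

lemma cont_sqrt: "continuous_on {0..m} sqrt"
  by (rule continuous_on_real_sqrt[OF continuous_on_id])

lemma fcalc_scalar:
  fixes x0 :: "'a::complex_inner"
  assumes x0: "x0 \<noteq> 0" and c: "0 \<le> c" and f: "continuous_on {0..c} f"
  shows "fcalc f (scaleC (complex_of_real c) :: 'a \<Rightarrow> 'a) = scaleC (complex_of_real (f c))"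
proof -
  have "fcalc f (\<lambda>x::'a. scaleC (complex_of_real c) x) =
    (\<lambda>x. scaleC (complex_of_real (f 0)) (x - x) + scaleC (complex_of_real (f c)) x)"
    by (rule fcalc_proj[OF bcl_id _ _ _ _ c f, of x0]) (simp_all add: x0)
  then show ?thesis by simp
qed

lemma fcalc_rank:
  fixes b :: "'a::complex_inner"
  assumes b: "b \<noteq> 0" and c: "0 \<le> c" and f: "continuous_on {0..c} f"
  shows "fcalc f (\<lambda>x. scaleC (complex_of_real c) (proj b x)) =
    (\<lambda>x. scaleC (complex_of_real (f 0)) (x - proj b x) + scaleC (complex_of_real (f c)) (proj b x))"
proof (rule fcalc_proj[OF bcl_proj proj_proj norm_proj_le norm_proj_diff_le _ c f])
  have "proj b b = b" using b by (simp add: proj_def cinner_self scaleC_one)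
  then show "proj b b \<noteq> 0" using b by simp
qed

lemma adj_scalar: "adj (scaleC a :: 'a::complex_inner \<Rightarrow> 'a) = scaleC (cnj a)"
  by (rule adj_eq) (simp add: cinner_scaleC_left cinner_scaleC_right)

lemma absop_scalar:
  "absop (scaleC a :: 'a::complex_inner \<Rightarrow> 'a) = scaleC (complex_of_real (cmod a))"
proof (cases "\<exists>x0::'a. x0 \<noteq> 0")
  case True
  then obtain x0 :: 'a where x0: "x0 \<noteq> 0" by blast
  have h: "cnj a * a = complex_of_real ((cmod a)\<^sup>2)"
    by (subst complex_norm_square) (rule mult.commute)
  have "adj (scaleC a :: 'a \<Rightarrow> 'a) \<circ> scaleC a = scaleC (complex_of_real ((cmod a)\<^sup>2))"
    by (rule ext) (simp only: comp_apply adj_scalar scaleC_scaleC h)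
  then show ?thesis
    unfolding absop_def using fcalc_scalar[OF x0 _ cont_sqrt, of "(cmod a)\<^sup>2"] by simp
next
  case False then show ?thesis by (intro trivial_fun_eq) blast
qed

lemma oppow_scalar:
  assumes "0 < r" "0 \<le> m"
  shows "oppow (scaleC (complex_of_real m) :: 'a::complex_inner \<Rightarrow> 'a) r = scaleC (complex_of_real (m powr r))"
proof (cases "\<exists>x0::'a. x0 \<noteq> 0")
  case True
  then obtain x0 :: 'a where x0: "x0 \<noteq> 0" by blast
  show ?thesis unfolding oppow_def by (rule fcalc_scalar[OF x0 assms(2) cont_powr[OF assms(1)]])
next
  case False then show ?thesis by (intro trivial_fun_eq) blast
qed

lemma ker_scalar: "ker (scaleC a :: 'a::complex_inner \<Rightarrow> 'a) = (if a = 0 then UNIV else {0})"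
  by (auto simp: ker_def scaleC_eq_0_iff)

lemma polar_V_scalar: "polar_V (scaleC a :: 'a::complex_inner \<Rightarrow> 'a) = scaleC (sgn a)"
  unfolding polar_V_def
proof (rule the_equality)
  have s: "sgn a * cnj (sgn a) * sgn a = sgn a"
  proof (cases "a = 0")
    case False
    then have "sgn a * cnj (sgn a) = 1" using complex_norm_square[of "sgn a"] by (simp add: norm_sgn)
    then show ?thesis by simp
  qed simp
  then have s': "sgn a * (cnj (sgn a) * sgn a) = sgn a" by (simp only: mult.assoc)
  have "(scaleC (sgn a) \<circ> adj (scaleC (sgn a)) \<circ> scaleC (sgn a) :: 'a \<Rightarrow> 'a) = scaleC (sgn a)"
    by (rule ext) (simp only: comp_apply adj_scalar scaleC_scaleC s')
  then have pi: "partial_isometry (scaleC (sgn a) :: 'a \<Rightarrow> 'a)"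
    unfolding partial_isometry_def using bcl_scale_op by blast
  have T: "(scaleC a :: 'a \<Rightarrow> 'a) = scaleC (sgn a) \<circ> absop (scaleC a)"
    by (rule ext) (simp add: absop_scalar scaleC_scaleC sgn_eq)
  have k1: "ker (scaleC (sgn a) :: 'a \<Rightarrow> 'a) = ker (scaleC a)"
    by (simp add: ker_scalar sgn_zero_iff)
  have k2: "ker (adj (scaleC (sgn a)) :: 'a \<Rightarrow> 'a) = ker (adj (scaleC a))"
    by (simp add: ker_scalar adj_scalar sgn_zero_iff)
  show "partial_isometry (scaleC (sgn a) :: 'a \<Rightarrow> 'a) \<and> (scaleC a :: 'a \<Rightarrow> 'a) = scaleC (sgn a) \<circ> absop (scaleC a) \<and>
    ker (scaleC (sgn a) :: 'a \<Rightarrow> 'a) = ker (scaleC a) \<and> ker (adj (scaleC (sgn a) :: 'a \<Rightarrow> 'a)) = ker (adj (scaleC a))"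
    using pi T k1 k2 by blast
next
  fix V :: "'a \<Rightarrow> 'a"
  assume H: "partial_isometry V \<and> scaleC a = V \<circ> absop (scaleC a) \<and> ker V = ker (scaleC a) \<and> ker (adj V) = ker (adj (scaleC a))"
  then have Vb: "bounded_clinear V" by (simp add: partial_isometry_def)
  show "V = scaleC (sgn a)"
  proof (rule ext)
    fix x
    show "V x = scaleC (sgn a) x"
    proof (cases "a = 0")
      case True
      then have "x \<in> ker V" using H by (simp add: ker_scalar)
      then show ?thesis using True by (simp add: ker_def)
    next
      case False
      have "scaleC a (scaleC (complex_of_real (1 / cmod a)) x) = V (absop (scaleC a) (scaleC (complex_of_real (1 / cmod a)) x))"
        using H by (metis comp_apply)
      also have "\<dots> = V x" using False by (simp add: absop_scalar scaleC_scaleC scaleC_one)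
      finally show ?thesis by (simp add: scaleC_scaleC sgn_eq divide_inverse)
    qed
  qed
qed

lemma aluthge_scalar:
  assumes "0 < l" "l < 1"
  shows "aluthge l (scaleC a :: 'a::complex_inner \<Rightarrow> 'a) = scaleC a"
proof -
  have l1: "0 < 1 - l" using assms by simp
  have "aluthge l (scaleC a :: 'a \<Rightarrow> 'a) =
     scaleC (complex_of_real (cmod a powr l)) \<circ> scaleC (sgn a) \<circ> scaleC (complex_of_real (cmod a powr (1 - l)))"
    unfolding aluthge_def absop_scalar polar_V_scalar oppow_scalar[OF assms(1) norm_ge_zero] oppow_scalar[OF l1 norm_ge_zero] ..
  also have "\<dots> = scaleC a"
  proof (rule ext)
    fix x
    show "(scaleC (complex_of_real (cmod a powr l)) \<circ> scaleC (sgn a) \<circ> scaleC (complex_of_real (cmod a powr (1 - l)))) x = scaleC a x"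
    proof (cases "a = 0")
      case False
      have "cmod a powr l * cmod a powr (1 - l) = cmod a"
        using False by (simp add: powr_add[symmetric])
      then have h: "complex_of_real (cmod a powr l) * complex_of_real (cmod a powr (1 - l)) = complex_of_real (cmod a)"
        by (simp only: of_real_mult[symmetric])
      have h2: "sgn a * complex_of_real (cmod a) = a" using False by (simp add: sgn_eq)
      have "complex_of_real (cmod a powr l) * sgn a * complex_of_real (cmod a powr (1 - l))
          = sgn a * (complex_of_real (cmod a powr l) * complex_of_real (cmod a powr (1 - l)))"
        by (simp only: mult_ac)
      then have "complex_of_real (cmod a powr l) * sgn a * complex_of_real (cmod a powr (1 - l)) = a"
        unfolding h h2 .
      then show ?thesis by (simp add: scaleC_scaleC mult.assoc)
    qed simp
  qed
  finally show ?thesis .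
qed


section \<open>Aluthge transform of rank-one operators\<close>

definition rank1 :: "'a::complex_inner \<Rightarrow> 'a \<Rightarrow> 'a \<Rightarrow> 'a" where
  "rank1 a b = (\<lambda>x. scaleC (cinner b x) a)"

lemma bcl_rank1': "bounded_clinear (rank1 a b)"
  unfolding rank1_def by (rule bcl_rank1)

lemma adj_rank1: "adj (rank1 a b) = rank1 b a"
proof (rule adj_eq)
  fix x y
  have "cnj (cinner b x) = cinner x b" by (simp add: cinner_commute[of x b])
  then show "cinner (rank1 a b x) y = cinner x (rank1 b a y)"
    by (simp add: rank1_def cinner_scaleC_left cinner_scaleC_right mult.commute)
qed

lemma rank1_zero: "a = 0 \<or> b = 0 \<Longrightarrow> rank1 a b = scaleC 0"
  by (rule ext) (auto simp: rank1_def)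

lemma proj_scaleC: "proj b (scaleC c x) = scaleC c (proj b x)"
  by (rule bcl_scaleC[OF bcl_proj])

lemma scaleC_proj_swap: "scaleC (cinner b a) (proj b x) = scaleC (cinner b x) (proj b a)"
  by (simp add: proj_def scaleC_scaleC mult_ac)

lemma aluthge_rank1:
  fixes a b :: "'a::complex_inner"
  assumes l: "0 < l" "l < 1"
  shows "aluthge l (rank1 a b) = (\<lambda>x. scaleC (cinner b a) (proj b x))"
proof (cases "a = 0 \<or> b = 0")
  case True
  then have "(\<lambda>x. scaleC (cinner b a) (proj b x)) = scaleC 0"
    by (auto intro!: ext simp: proj_def)
  then show ?thesis using rank1_zero[OF True] aluthge_scalar[OF l, of 0] by simp
next
  case False
  then have a: "a \<noteq> 0" and b: "b \<noteq> 0" by auto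
  define m where "m = norm a * norm b"
  have m: "m > 0" using a b by (simp add: m_def)
  define T where "T = rank1 a b"
  have Tx: "T x = scaleC (cinner b x) a" for x by (simp add: T_def rank1_def)
  have adjT: "adj T = rank1 b a" by (simp add: T_def adj_rank1)
  have AT: "adj T \<circ> T = (\<lambda>x. scaleC (complex_of_real (m\<^sup>2)) (proj b x))"
  proof (rule ext)
    fix x
    have "(adj T \<circ> T) x = scaleC (cinner b x * complex_of_real ((norm a)\<^sup>2)) b"
      by (simp add: adjT rank1_def Tx cinner_scaleC_right cinner_self)
    also have "\<dots> = scaleC (complex_of_real (m\<^sup>2)) (proj b x)"
      using b by (simp add: proj_def scaleC_scaleC m_def power_mult_distrib mult.commute)
    finally show "(adj T \<circ> T) x = scaleC (complex_of_real (m\<^sup>2)) (proj b x)" .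
  qed
  have absT: "absop T = (\<lambda>x. scaleC (complex_of_real m) (proj b x))"
    unfolding absop_def AT fcalc_rank[OF b zero_le_power2 cont_sqrt] using m by simp
  have powT: "oppow (absop T) r = (\<lambda>x. scaleC (complex_of_real (m powr r)) (proj b x))" if r: "0 < r" for r
    unfolding oppow_def absT fcalc_rank[OF b less_imp_le[OF m] cont_powr[OF r]] using r by simp
  define V0 where "V0 = (\<lambda>x. scaleC (complex_of_real (1 / m)) (scaleC (cinner b x) a))"
  have V0b: "bounded_clinear V0" unfolding V0_def by (rule bcl_scaled[OF bcl_rank1])
  have V0x: "V0 x = scaleC (cinner b x / complex_of_real m) a" for x
    by (simp add: V0_def scaleC_scaleC)
  have adjV0: "adj V0 = (\<lambda>y. scaleC (cinner a y / complex_of_real m) b)"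
  proof (rule adj_eq)
    fix x y
    have "cnj (cinner b x) = cinner x b" by (simp add: cinner_commute[of x b])
    then show "cinner (V0 x) y = cinner x (scaleC (cinner a y / complex_of_real m) b)"
      by (simp add: V0x cinner_scaleC_left cinner_scaleC_right mult.commute)
  qed
  have nab: "complex_of_real ((norm a)\<^sup>2) * complex_of_real ((norm b)\<^sup>2) = complex_of_real m * complex_of_real m"
    by (simp add: m_def power2_eq_square)
  have piV0: "partial_isometry V0"
    unfolding partial_isometry_def
  proof (intro conjI V0b ext)
    fix x
    have "(V0 \<circ> adj V0 \<circ> V0) x = scaleC (cinner b x * (complex_of_real ((norm a)\<^sup>2) * complex_of_real ((norm b)\<^sup>2))
         / (complex_of_real m * complex_of_real m * complex_of_real m)) a"
      by (simp add: V0x adjV0 cinner_scaleC_right cinner_self mult_ac)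
    also have "\<dots> = V0 x" unfolding nab V0x using m by (simp add: field_simps power2_eq_square)
    finally show "(V0 \<circ> adj V0 \<circ> V0) x = V0 x" .
  qed
  have TV0: "T = V0 \<circ> absop T"
  proof (rule ext)
    fix x show "T x = (V0 \<circ> absop T) x"
      using m by (simp add: Tx V0x absT cinner_scaleC_right cinner_v_proj)
  qed
  have kV0: "ker V0 = ker T"
    using a m by (auto simp: ker_def V0x Tx scaleC_eq_0_iff)
  have kadj: "ker (adj V0) = ker (adj T)"
    using b m by (auto simp: ker_def adjV0 adjT rank1_def scaleC_eq_0_iff)
  have polT: "polar_V T = V0"
    unfolding polar_V_def
  proof (rule the_equality)
    show "partial_isometry V0 \<and> T = V0 \<circ> absop T \<and> ker V0 = ker T \<and> ker (adj V0) = ker (adj T)"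
      using piV0 TV0 kV0 kadj by blast
  next
    fix V assume H: "partial_isometry V \<and> T = V \<circ> absop T \<and> ker V = ker T \<and> ker (adj V) = ker (adj T)"
    then have Vb: "bounded_clinear V" by (simp add: partial_isometry_def)
    show "V = V0"
    proof (rule ext)
      fix x
      have "x - proj b x \<in> ker T" by (simp add: ker_def Tx cinner_proj_orth)
      moreover have "ker V = ker T" using H by blast
      ultimately have "x - proj b x \<in> ker V" by simp
      then have z: "V (x - proj b x) = 0" by (simp add: ker_def)
      define y where "y = scaleC (complex_of_real (1 / m)) (proj b x)"
      have ay: "absop T y = proj b x"
        using m by (simp add: absT y_def proj_scaleC proj_proj scaleC_scaleC scaleC_one)
      have "T y = V (absop T y)" using H by (metis comp_apply)
      then have Vp: "V (proj b x) = scaleC (cinner b x / complex_of_real m) a"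
        using ay by (simp add: Tx y_def cinner_scaleC_right cinner_v_proj)
      have "V x = V (proj b x + (x - proj b x))" by simp
      also have "\<dots> = V (proj b x) + V (x - proj b x)" by (rule bcl_add[OF Vb])
      finally show "V x = V0 x" using Vp z by (simp add: V0x)
    qed
  qed
  have l1: "0 < 1 - l" using l by simp
  have "aluthge l T = (\<lambda>x. scaleC (cinner b x) (proj b a))"
  proof (rule ext)
    fix x
    have mm: "complex_of_real (m powr l) * (complex_of_real (m powr (1 - l)) / complex_of_real m) = 1"
    proof -
      have "m powr l * m powr (1 - l) = m" using m by (simp add: powr_add[symmetric])
      then show ?thesis using m by (simp add: field_simps flip: of_real_mult)
    qed
    have "aluthge l T x = scaleC (complex_of_real (m powr l))
        (proj b (scaleC (cinner b (scaleC (complex_of_real (m powr (1 - l))) (proj b x)) / complex_of_real m) a))"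
      unfolding aluthge_def polT powT[OF l(1)] powT[OF l1] by (simp add: V0x)
    also have "\<dots> = scaleC (complex_of_real (m powr l) * (complex_of_real (m powr (1 - l)) / complex_of_real m) * cinner b x) (proj b a)"
      by (simp add: proj_scaleC cinner_scaleC_right cinner_v_proj scaleC_scaleC mult_ac)
    also have "\<dots> = scaleC (cinner b x) (proj b a)" unfolding mm by simp
    finally show "aluthge l T x = scaleC (cinner b x) (proj b a)" .
  qed
  then show ?thesis unfolding T_def by (simp add: scaleC_proj_swap)
qed


section \<open>Riesz representation\<close>

lemma parallelogram:
  "(norm (p + q::'a::complex_inner))\<^sup>2 + (norm (p - q))\<^sup>2 = 2 * (norm p)\<^sup>2 + 2 * (norm q)\<^sup>2"
proof -
  have "cinner (p + q) (p + q) + cinner (p - q) (p - q) = 2 * cinner p p + 2 * cinner q q"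
    by (simp add: cinner_add_left cinner_add_right cinner_diff_left cinner_diff_right)
  then have "Re (cinner (p + q) (p + q)) + Re (cinner (p - q) (p - q)) = 2 * Re (cinner p p) + 2 * Re (cinner q q)"
    by (metis plus_complex.sel(1) times_complex.sel(1) Re_complex_of_real Im_complex_of_real mult_zero_left diff_zero
        of_real_numeral)
  then show ?thesis by (simp add: norm_sq_cinner)
qed

lemma riesz:
  fixes f :: "'a::chilbert_space \<Rightarrow> complex"
  assumes add: "\<And>x y. f (x + y) = f x + f y"
    and hom: "\<And>c x. f (scaleC c x) = c * f x"
    and bnd: "\<And>x. cmod (f x) \<le> K * norm x"
  shows "\<exists>w. \<forall>x. f x = cinner w x"
proof (cases "\<forall>x. f x = 0")
  case True
  then show ?thesis by (intro exI[of _ 0]) simp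
next
  case False
  then obtain x1 where x1: "f x1 \<noteq> 0" by blast
  define x0 where "x0 = scaleC (1 / f x1) x1"
  have fx0: "f x0 = 1" using x1 by (simp add: x0_def hom)
  have f0: "f 0 = 0" using hom[of 0 0] by simp
  have fdiff: "f (x - y) = f x - f y" for x y
    using add[of "x - y" y] by simp
  have fR: "f (scaleR r x) = complex_of_real r * f x" for r x
    using hom[of "complex_of_real r" x] by (simp add: scaleC_of_real)
  define N where "N = {n. f n = 0}"
  define S where "S = (\<lambda>n. (norm (x0 - n))\<^sup>2) ` N"
  define D where "D = Inf S"
  have SN: "S \<noteq> {}" using f0 by (auto simp: S_def N_def)
  have Sb: "bdd_below S" unfolding S_def by (rule bdd_belowI[of _ 0]) auto
  have Dle: "D \<le> (norm (x0 - n))\<^sup>2" if "n \<in> N" for n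
    unfolding D_def by (rule cInf_lower[OF _ Sb]) (use that in \<open>simp add: S_def\<close>)
  have "\<exists>n\<in>N. (norm (x0 - n))\<^sup>2 < D + 1 / real (Suc k)" for k
  proof -
    have "Inf S < D + 1 / real (Suc k)" by (simp add: D_def)
    from cInf_lessD[OF SN this] show ?thesis by (auto simp: S_def)
  qed
  then obtain ns where ns: "\<And>k. ns k \<in> N" "\<And>k. (norm (x0 - ns k))\<^sup>2 < D + 1 / real (Suc k)"
    by metis
  have est: "(norm (ns i - ns j))\<^sup>2 \<le> 2 / real (Suc i) + 2 / real (Suc j)" for i j
  proof -
    define p where "p = x0 - ns i"
    define q where "q = x0 - ns j"
    define mid where "mid = scaleR (1/2) (ns i + ns j)"
    have midN: "mid \<in> N" using ns(1)[of i] ns(1)[of j] by (simp add: N_def mid_def fR add)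
    have pq: "p + q = scaleR 2 (x0 - mid)"
      by (simp add: p_def q_def mid_def scaleR_right_diff_distrib scaleR_2 algebra_simps)
    have "(norm (p + q))\<^sup>2 = 4 * (norm (x0 - mid))\<^sup>2"
      by (simp add: pq power_mult_distrib)
    then have "4 * D \<le> (norm (p + q))\<^sup>2" using Dle[OF midN] by simp
    moreover have "p - q = ns j - ns i" by (simp add: p_def q_def)
    moreover note parallelogram[of p q]
    moreover have "(norm p)\<^sup>2 < D + 1 / real (Suc i)" using ns(2)[of i] by (simp add: p_def)
    moreover have "(norm q)\<^sup>2 < D + 1 / real (Suc j)" using ns(2)[of j] by (simp add: q_def)
    ultimately have "(norm (ns j - ns i))\<^sup>2 \<le> 2 / real (Suc i) + 2 / real (Suc j)" by simp
    then show ?thesis by (simp add: norm_minus_commute)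
  qed
  have "Cauchy ns"
  proof (rule CauchyI)
    fix e :: real assume e: "0 < e"
    then have "0 < e\<^sup>2 / 4" by simp
    then obtain M where M: "1 / real (Suc M) < e\<^sup>2 / 4" using nat_approx_posE by blast
    show "\<exists>M. \<forall>m\<ge>M. \<forall>n\<ge>M. norm (ns m - ns n) < e"
    proof (intro exI[of _ M] allI impI)
      fix i j assume i: "M \<le> i" and j: "M \<le> j"
      have "1 / real (Suc i) \<le> 1 / real (Suc M)" using i by (intro divide_left_mono) simp_all
      moreover have "1 / real (Suc j) \<le> 1 / real (Suc M)" using j by (intro divide_left_mono) simp_all
      ultimately have "(norm (ns i - ns j))\<^sup>2 < e\<^sup>2" using est[of i j] M by simp
      then show "norm (ns i - ns j) < e" using e by (simp add: power_less_imp_less_base)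
    qed
  qed
  then obtain nst where lim: "ns \<longlonglongrightarrow> nst" using Cauchy_convergent convergent_def by blast
  have "cmod (f nst) \<le> 0"
  proof (rule tendsto_le[OF trivial_limit_sequentially])
    have "(\<lambda>k. nst - ns k) \<longlonglongrightarrow> nst - nst" by (intro tendsto_diff tendsto_const lim)
    then have "(\<lambda>k. norm (nst - ns k)) \<longlonglongrightarrow> norm (nst - nst)" by (rule tendsto_norm)
    from tendsto_mult_left[OF this, of K] show "(\<lambda>k. K * norm (nst - ns k)) \<longlonglongrightarrow> 0"
      by simp
    show "(\<lambda>k. cmod (f nst)) \<longlonglongrightarrow> cmod (f nst)" by simp
    show "eventually (\<lambda>k. cmod (f nst) \<le> K * norm (nst - ns k)) sequentially"
    proof (rule always_eventually, rule allI)
      fix k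
      have "f nst = f (nst - ns k)" using ns(1)[of k] by (simp add: fdiff N_def)
      then show "cmod (f nst) \<le> K * norm (nst - ns k)" using bnd by simp
    qed
  qed
  then have nstN: "f nst = 0" by simp
  define z where "z = x0 - nst"
  have "(norm z)\<^sup>2 \<le> D"
  proof (rule tendsto_le[OF trivial_limit_sequentially])
    show "(\<lambda>k. (norm (x0 - ns k))\<^sup>2) \<longlonglongrightarrow> (norm z)\<^sup>2"
      unfolding z_def by (intro tendsto_intros lim)
    show "(\<lambda>k. D + 1 / real (Suc k)) \<longlonglongrightarrow> D"
      using tendsto_add[OF tendsto_const[of D] LIMSEQ_inverse_real_of_nat] by (simp add: inverse_eq_divide)
    show "eventually (\<lambda>k. (norm (x0 - ns k))\<^sup>2 \<le> D + 1 / real (Suc k)) sequentially"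
      using ns(2) by (intro always_eventually allI less_imp_le)
  qed
  then have zmin: "(norm z)\<^sup>2 \<le> (norm (z - v))\<^sup>2" if "f v = 0" for v
  proof -
    have "nst + v \<in> N" using nstN that by (simp add: N_def add)
    from Dle[OF this] have "D \<le> (norm (z - v))\<^sup>2" by (simp add: z_def algebra_simps)
    with \<open>(norm z)\<^sup>2 \<le> D\<close> show ?thesis by (rule order_trans)
  qed
  have fz: "f z = 1" by (simp add: z_def fdiff fx0 nstN)
  then have z0: "z \<noteq> 0" using f0 by auto
  have orth: "cinner n z = 0" if "f n = 0" for n
  proof (cases "n = 0")
    case False
    have "f (proj n z) = 0" using that by (simp add: proj_def hom)
    from zmin[OF this] have "(norm z)\<^sup>2 \<le> (norm (z - proj n z))\<^sup>2" .
    with proj_decomp_norm[of z n] have "norm (proj n z) = 0" by simp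
    then show ?thesis using False by (simp add: norm_proj)
  qed simp
  define w where "w = scaleC (1 / complex_of_real ((norm z)\<^sup>2)) z"
  show ?thesis
  proof (rule exI[of _ w], rule allI)
    fix x
    have "f (x - scaleC (f x) z) = 0" by (simp add: fdiff hom fz)
    from orth[OF this] have "cinner x z = cnj (f x) * cinner z z"
      by (simp add: cinner_diff_left cinner_scaleC_left)
    then have "cnj (cinner x z) = f x * cinner z z"
      by (simp add: cinner_self)
    then have "cinner z x = f x * complex_of_real ((norm z)\<^sup>2)"
      by (simp add: cinner_self cinner_commute[of x z])
    then show "f x = cinner w x"
      using z0 by (simp add: w_def cinner_scaleC_left)
  qed
qed


section \<open>Operators commuting under the Aluthge transform with rank-one operators are scalar\<close>

lemma adj_vec:
  fixes S :: "'a::chilbert_space \<Rightarrow> 'a"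
  assumes Sb: "bounded_clinear S"
  shows "\<exists>w. \<forall>x. cinner v (S x) = cinner w x"
proof -
  obtain K where K: "K \<ge> 0" "\<And>x. norm (S x) \<le> norm x * K" using bcl_bound_nonneg[OF Sb] by blast
  show ?thesis
  proof (rule riesz[of "\<lambda>x. cinner v (S x)" "norm v * K"])
    show "cinner v (S (x + y)) = cinner v (S x) + cinner v (S y)" for x y
      by (simp add: bcl_add[OF Sb] cinner_add_right)
    show "cinner v (S (scaleC c x)) = c * cinner v (S x)" for c x
      by (simp add: bcl_scaleC[OF Sb] cinner_scaleC_right)
    show "cmod (cinner v (S x)) \<le> norm v * K * norm x" for x
    proof -
      have "cmod (cinner v (S x)) \<le> norm v * norm (S x)" by (rule cauchy_schwarz)
      also have "\<dots> \<le> norm v * (norm x * K)" by (rule mult_left_mono[OF K(2)]) simp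
      finally show ?thesis by (simp add: mult_ac)
    qed
  qed
qed

lemma all_eigen_scalar:
  fixes L :: "'a::complex_vector \<Rightarrow> 'a"
  assumes add: "\<And>x y. L (x + y) = L x + L y"
    and hom: "\<And>c x. L (scaleC c x) = scaleC c (L x)"
    and eig: "\<And>v. \<exists>c. L v = scaleC c v"
  shows "\<exists>d. \<forall>v. L v = scaleC d v"
proof (cases "\<exists>v0::'a. v0 \<noteq> 0")
  case False
  then show ?thesis by (intro exI[of _ 0]) auto
next
  case True
  then obtain v0 :: 'a where v0: "v0 \<noteq> 0" by blast
  obtain c0 where c0: "L v0 = scaleC c0 v0" using eig by blast
  show ?thesis
  proof (rule exI[of _ c0], rule allI)
    fix v
    obtain cv where cv: "L v = scaleC cv v" using eig by blast
    obtain c' where c': "L (v + v0) = scaleC c' (v + v0)" using eig by blast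
    have eq: "scaleC c' v + scaleC c' v0 = scaleC cv v + scaleC c0 v0"
      using c' by (simp add: add cv c0 scaleC_add_right)
    then have eq2: "scaleC (c' - cv) v = scaleC (c0 - c') v0"
      by (simp add: scaleC_diff_left algebra_simps)
    show "L v = scaleC c0 v"
    proof (cases "c' = cv")
      case True
      then have "scaleC (c0 - c') v0 = 0" using eq2 by simp
      then have "c0 = c'" using v0 by (simp add: scaleC_eq_0_iff)
      then show ?thesis using cv True by simp
    next
      case False
      have "v = scaleC (inverse (c' - cv)) (scaleC (c' - cv) v)"
        using False by (simp add: scaleC_scaleC scaleC_one)
      also have "\<dots> = scaleC (inverse (c' - cv) * (c0 - c')) v0"
        unfolding eq2 by (simp add: scaleC_scaleC)
      finally have vt: "v = scaleC (inverse (c' - cv) * (c0 - c')) v0" .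
      show ?thesis by (subst (1 2) vt) (simp add: hom c0 scaleC_scaleC mult.commute)
    qed
  qed
qed

lemma scalar_from_rank1_commute:
  fixes S :: "'a::chilbert_space \<Rightarrow> 'a"
  assumes Sb: "bounded_clinear S" and l: "0 < l" "l < 1"
    and H: "\<And>u v. aluthge l (S \<circ> rank1 u v) = aluthge l (rank1 u v \<circ> S)"
  shows "\<exists>c. S = scaleC c"
proof -
  define L where "L v = (SOME w. \<forall>x. cinner v (S x) = cinner w x)" for v
  have Lp: "cinner v (S x) = cinner (L v) x" for v x
    using someI_ex[OF adj_vec[OF Sb, of v]] unfolding L_def by blast
  have Lr: "rank1 u v \<circ> S = rank1 u (L v)" for u v
    by (rule ext) (simp add: rank1_def Lp)
  have Sr: "S \<circ> rank1 u v = rank1 (S u) v" for u v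
    by (rule ext) (simp add: rank1_def bcl_scaleC[OF Sb])
  have key: "scaleC (cinner v (S u)) (proj v x) = scaleC (cinner (L v) u) (proj (L v) x)" for u v x
  proof -
    have e: "(\<lambda>x. scaleC (cinner v (S u)) (proj v x)) = (\<lambda>x. scaleC (cinner (L v) u) (proj (L v) x))"
      using H[of u v] unfolding Lr Sr aluthge_rank1[OF l] .
    show ?thesis using fun_cong[OF e, of x] by simp
  qed
  have Ladd: "L (x + y) = L x + L y" for x y
    by (rule cinner_ext_left) (simp add: Lp[symmetric] cinner_add_left)
  have Lhom: "L (scaleC c x) = scaleC c (L x)" for c x
    by (rule cinner_ext_left) (simp add: Lp[symmetric] cinner_scaleC_left)
  have eig: "\<exists>c. L v = scaleC c v" for v
  proof (cases "L v = 0")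
    case True then show ?thesis by (intro exI[of _ 0]) simp
  next
    case False
    define w where "w = L v"
    have w0: "w \<noteq> 0" using False by (simp add: w_def)
    have c0: "cinner v (S w) = complex_of_real ((norm w)\<^sup>2)"
      by (simp add: Lp w_def cinner_self)
    have c0': "cinner (L v) w = complex_of_real ((norm w)\<^sup>2)"
      by (simp add: w_def cinner_self)
    have pw: "proj w w = w" using w0 by (simp add: proj_def cinner_self scaleC_one)
    have "scaleC (complex_of_real ((norm w)\<^sup>2)) (proj v w) = scaleC (complex_of_real ((norm w)\<^sup>2)) w"
      using key[of v w w] unfolding c0 c0' by (simp add: w_def[symmetric] pw)
    then have "scaleC (complex_of_real ((norm w)\<^sup>2)) (proj v w - w) = 0" by (simp add: scaleC_diff_right)
    then have "proj v w = w" using w0 by (simp add: scaleC_eq_0_iff)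
    then have "w = scaleC (cinner v w / complex_of_real ((norm v)\<^sup>2)) v" by (simp add: proj_def)
    then show ?thesis unfolding w_def by blast
  qed
  obtain d where d: "\<And>v. L v = scaleC d v" using all_eigen_scalar[OF Ladd Lhom eig] by blast
  have "S u = scaleC (cnj d) u" for u
  proof (rule cinner_ext_right)
    fix v
    show "cinner v (S u) = cinner v (scaleC (cnj d) u)"
      by (simp add: Lp d cinner_scaleC_left cinner_scaleC_right)
  qed
  then show ?thesis by (intro exI[of _ "cnj d"] ext)
qed


lemma scaleC_zero_fun: "scaleC 0 = (\<lambda>x::'a::complex_vector. 0)"
  by (rule ext) simp

lemma bops_scalar: "(scaleC c :: 'a::complex_inner \<Rightarrow> 'a) \<in> bops"
  by (simp add: bops_def bcl_scale_op)

lemma bops_rank1: "rank1 u v \<in> bops"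
  by (simp add: bops_def bcl_rank1')

lemma bops_aluthge_rank1: "0 < l \<Longrightarrow> l < 1 \<Longrightarrow> aluthge l (rank1 a b) \<in> bops"
  by (simp add: aluthge_rank1 bops_def bcl_scaled[OF bcl_proj])

lemma comp_rank1_left: "bounded_clinear A \<Longrightarrow> A \<circ> rank1 u v = rank1 (A u) v"
  by (rule ext) (simp add: rank1_def bcl_scaleC)

lemma comp_rank1_right:
  fixes A :: "'a::chilbert_space \<Rightarrow> 'a"
  assumes "bounded_clinear A"
  shows "\<exists>w. rank1 u v \<circ> A = rank1 u w"
proof -
  obtain w where w: "\<forall>x. cinner v (A x) = cinner w x" using adj_vec[OF assms] by blast
  show ?thesis by (rule exI[of _ w], rule ext) (simp add: rank1_def w)
qed

lemma scalar_commute: "bounded_clinear B \<Longrightarrow> scaleC c \<circ> B = B \<circ> scaleC c"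
  by (rule ext) (simp add: bcl_scaleC)

lemma scaleC_fun_inj:
  assumes "(y0::'a::complex_vector) \<noteq> 0" "scaleC c = (scaleC d :: 'a \<Rightarrow> 'a)"
  shows "c = d"
  using fun_cong[OF assms(2), of y0] assms(1) by (simp add: scaleC_cancel_left)

theorem proposition2p2:
  fixes \<Phi> :: "('h::chilbert_space \<Rightarrow> 'h) \<Rightarrow> ('k::chilbert_space \<Rightarrow> 'k)"
    and l :: real
  assumes "0 < l" and "l < 1"
    and "bij_betw \<Phi> bops bops"
    and "\<forall>A\<in>bops. \<forall>B\<in>bops. aluthge l (\<Phi> A \<circ> \<Phi> B) = \<Phi> (aluthge l (A \<circ> B))"
  shows "\<Phi> (\<lambda>x. 0) = (\<lambda>y. 0) \<and>
    (\<exists>h :: complex \<Rightarrow> complex. bij h \<and>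
       (\<forall>\<alpha>. \<Phi> (\<lambda>x. scaleC \<alpha> x) = (\<lambda>y. scaleC (h \<alpha>) y)) \<and>
       (\<forall>\<alpha> \<beta>. h (\<alpha> * \<beta>) = h \<alpha> * h \<beta>) \<and>
       h 1 = 1 \<and> (\<forall>\<alpha>. h (- \<alpha>) = - h \<alpha>))"
proof -
  note l = assms(1,2)
  have eq: "aluthge l (\<Phi> A \<circ> \<Phi> B) = \<Phi> (aluthge l (A \<circ> B))" if "A \<in> bops" "B \<in> bops" for A B
    using assms(4) that by blast
  have surj: "\<Phi> ` bops = bops" using assms(3) by (rule bij_betw_imp_surj_on)
  have inj: "inj_on \<Phi> bops" using assms(3) by (rule bij_betw_imp_inj_on)
  have Phi_in: "\<Phi> A \<in> bops" if "A \<in> bops" for A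
  proof -
    have "\<Phi> A \<in> \<Phi> ` bops" using that by (rule imageI)
    then show ?thesis unfolding surj .
  qed
  have pre: "\<exists>A\<in>bops. \<Phi> A = T" if "T \<in> bops" for T
  proof -
    have "T \<in> \<Phi> ` bops" unfolding surj by (rule that)
    then show ?thesis by (auto simp: image_iff)
  qed
  have Z: "\<Phi> (scaleC 0) = scaleC 0"
  proof -
    obtain A0 where A0: "A0 \<in> bops" "\<Phi> A0 = scaleC 0" using pre[OF bops_scalar] by blast
    have "aluthge l (\<Phi> A0 \<circ> \<Phi> (scaleC 0)) = \<Phi> (aluthge l (A0 \<circ> scaleC 0))"
      by (rule eq[OF A0(1) bops_scalar])
    moreover have "\<Phi> A0 \<circ> \<Phi> (scaleC 0) = scaleC 0" by (rule ext) (simp add: A0(2))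
    moreover have "A0 \<circ> scaleC 0 = scaleC 0"
      using A0(1) by (intro ext) (simp add: bops_def bcl_zero)
    ultimately show ?thesis by (simp add: aluthge_scalar[OF l])
  qed
  have part1: "\<Phi> (\<lambda>x. 0) = (\<lambda>y. 0)" using Z by (simp add: scaleC_zero_fun)
  show ?thesis
  proof (cases "\<exists>y0::'k. y0 \<noteq> 0")
    case False
    have "bij (id :: complex \<Rightarrow> complex)" by simp
    moreover have "\<forall>\<alpha>. \<Phi> (\<lambda>x. scaleC \<alpha> x) = (\<lambda>y. scaleC (id \<alpha>) y)"
      using False by (intro allI trivial_fun_eq) blast
    ultimately show ?thesis using part1 by (intro conjI exI[of _ id]) auto
  next
    case True
    then obtain y0 :: 'k where y0: "y0 \<noteq> 0" by blast
    have "\<exists>x0::'h. x0 \<noteq> 0"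
    proof (rule ccontr)
      assume "\<not> (\<exists>x0::'h. x0 \<noteq> 0)"
      then have triv: "\<forall>x::'h. x = 0" by blast
      obtain A1 where A1: "A1 \<in> bops" "\<Phi> A1 = scaleC 1" using pre[OF bops_scalar] by blast
      have "A1 = scaleC 0" using triv by (rule trivial_fun_eq)
      then have "scaleC 1 = (scaleC 0 :: 'k \<Rightarrow> 'k)" using A1 Z by simp
      then show False using scaleC_fun_inj[OF y0] by force
    qed
    then obtain x0 :: 'h where x0: "x0 \<noteq> 0" by blast
    have sc: "\<exists>c. \<Phi> (scaleC a) = scaleC c" for a
    proof (rule scalar_from_rank1_commute[OF _ l])
      show "bounded_clinear (\<Phi> (scaleC a))" using Phi_in[OF bops_scalar] by (simp add: bops_def)
      fix u v :: 'k
      obtain B where B: "B \<in> bops" "\<Phi> B = rank1 u v" using pre[OF bops_rank1] by blast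
      have "aluthge l (\<Phi> (scaleC a) \<circ> rank1 u v) = \<Phi> (aluthge l (scaleC a \<circ> B))"
        using eq[OF bops_scalar B(1)] B(2) by simp
      also have "scaleC a \<circ> B = B \<circ> scaleC a" using B(1) by (simp add: bops_def scalar_commute)
      also have "\<Phi> (aluthge l (B \<circ> scaleC a)) = aluthge l (rank1 u v \<circ> \<Phi> (scaleC a))"
        using eq[OF B(1) bops_scalar] B(2) by simp
      finally show "aluthge l (\<Phi> (scaleC a) \<circ> rank1 u v) = aluthge l (rank1 u v \<circ> \<Phi> (scaleC a))" .
    qed
    define h where "h a = (SOME c. \<Phi> (scaleC a) = scaleC c)" for a
    have hp: "\<Phi> (scaleC a) = scaleC (h a)" for a
      unfolding h_def using someI_ex[OF sc[of a]] .
    have h0: "h 0 = 0" using hp[of 0] Z scaleC_fun_inj[OF y0] by metis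
    have hmult: "h (a * b) = h a * h b" for a b
    proof -
      have "scaleC (h (a * b)) = \<Phi> (aluthge l (scaleC a \<circ> scaleC b))"
        by (simp add: hp[symmetric] aluthge_scalar[OF l] comp_def scaleC_scaleC)
      also have "\<dots> = aluthge l (\<Phi> (scaleC a) \<circ> \<Phi> (scaleC b))"
        by (rule eq[OF bops_scalar bops_scalar, symmetric])
      also have "\<dots> = scaleC (h a * h b)"
        by (simp add: hp aluthge_scalar[OF l] comp_def scaleC_scaleC)
      finally show ?thesis by (rule scaleC_fun_inj[OF y0])
    qed
    have hinj: "inj h"
    proof (rule injI)
      fix a b assume "h a = h b"
      then have "\<Phi> (scaleC a) = \<Phi> (scaleC b)" by (simp add: hp)
      then have "(scaleC a :: 'h \<Rightarrow> 'h) = scaleC b" using inj bops_scalar by (metis inj_on_def)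
      then show "a = b" by (rule scaleC_fun_inj[OF x0])
    qed
    have hsurj: "surj h"
    proof -
      have "c \<in> range h" for c
      proof -
        obtain A where A: "A \<in> bops" "\<Phi> A = scaleC c" using pre[OF bops_scalar] by blast
        have Ab: "bounded_clinear A" using A(1) by (simp add: bops_def)
        have "\<exists>a. A = scaleC a"
        proof (rule scalar_from_rank1_commute[OF Ab l])
          fix u v :: 'h
          obtain w where w: "rank1 u v \<circ> A = rank1 u w" using comp_rank1_right[OF Ab] by blast
          have "\<Phi> (aluthge l (A \<circ> rank1 u v)) = aluthge l (scaleC c \<circ> \<Phi> (rank1 u v))"
            using eq[OF A(1) bops_rank1] A(2) by simp
          also have "scaleC c \<circ> \<Phi> (rank1 u v) = \<Phi> (rank1 u v) \<circ> scaleC c"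
            using Phi_in[OF bops_rank1] by (simp add: bops_def scalar_commute)
          also have "aluthge l (\<Phi> (rank1 u v) \<circ> scaleC c) = \<Phi> (aluthge l (rank1 u v \<circ> A))"
            using eq[OF bops_rank1 A(1)] A(2) by simp
          finally have e: "\<Phi> (aluthge l (A \<circ> rank1 u v)) = \<Phi> (aluthge l (rank1 u v \<circ> A))" .
          have m1: "aluthge l (A \<circ> rank1 u v) \<in> bops"
            unfolding comp_rank1_left[OF Ab] by (rule bops_aluthge_rank1[OF l])
          have m2: "aluthge l (rank1 u v \<circ> A) \<in> bops"
            unfolding w by (rule bops_aluthge_rank1[OF l])
          show "aluthge l (A \<circ> rank1 u v) = aluthge l (rank1 u v \<circ> A)"
            using inj m1 m2 e by (simp add: inj_on_def)
        qed
        then obtain a where a: "A = scaleC a" by blast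
        have "scaleC (h a) = (scaleC c :: 'k \<Rightarrow> 'k)" using A(2) a hp by simp
        then have "h a = c" by (rule scaleC_fun_inj[OF y0])
        then show ?thesis by blast
      qed
      then show ?thesis by blast
    qed
    have h1: "h 1 = 1"
    proof -
      have "h 1 = h 1 * h 1" using hmult[of 1 1] by simp
      moreover have "h 1 \<noteq> 0" using hinj h0 by (metis injD one_neq_zero)
      ultimately show ?thesis by (metis mult_cancel_left1)
    qed
    have hm1: "h (-1) = -1"
    proof -
      have "h (-1) * h (-1) = 1" using hmult[of "-1" "-1"] h1 by simp
      then have "(h (-1) - 1) * (h (-1) + 1) = 0" by (simp add: algebra_simps)
      moreover have "h (-1) \<noteq> 1" using hinj h1 by (metis injD one_neq_neg_one)
      ultimately show ?thesis by (simp add: eq_neg_iff_add_eq_0)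
    qed
    have hneg: "h (- a) = - h a" for a
      using hmult[of "-1" a] hm1 by simp
    show ?thesis
    proof (intro conjI exI[of _ h] allI)
      show "\<Phi> (\<lambda>x. 0) = (\<lambda>y. 0)" by (rule part1)
      show "bij h" using hinj hsurj by (rule bijI)
      show "\<Phi> (\<lambda>x. scaleC a x) = (\<lambda>y. scaleC (h a) y)" for a using hp[of a] by simp
      show "h (a * b) = h a * h b" for a b by (rule hmult)
      show "h 1 = 1" by (rule h1)
      show "h (- a) = - h a" for a by (rule hneg)
    qed
  qed
qed

end
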